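(* Let $D\ge 1$. The underlying block design $\mathcal{F}$ of any $(T,N,D)$-tropical code is $(D-1)$-disjunct.
   Context: Tropical arithmetic on $\mathbb{R}\cup\{\infty\}$: $x\oplus y=\min(x,y)$, $x\odot y=x+y$, with $x\oplus\infty=x$ and $x\odot\infty=\infty$. For a matrix $S$ with $T$ rows and $N$ columns and a column vector $\mathbf{x}$ of length $N$, $S\odot\mathbf{x}$ is the vector whose $t$-th entry is $\min_{j}(S_{tj}+x_j)$. A $(T,N,D)$-tropical code is a matrix $S\in(\{0\}\cup\mathbb{N}\cup\{\infty\})^{T\times N}$ such that for any two distinct vectors $\mathbf{x},\mathbf{y}\in(\{0\}\cup\mathbb{N}\cup\{\infty\})^{N}$, each having at most $D$ finite entries, $S\odot\mathbf{x}\ne S\odot\mathbf{y}$. The underlying block design of $S$ is the multiset $\mathcal{F}=\{\{t\in[T]: S_{tj}<\infty\}: j\in[N]\}$ (one block per column, so $|\mathcal{F}|=N$); "distinct blocks" means blocks coming from distinct columns (they may coincide as sets). $\mathcal{F}$ is $m$-disjunct if $|Z\setminus(B_1\cup\dots\cup B_m)|\ge 1$ for all distinct blocks $Z,B_1,\dots,B_m\in\mathcal{F}$ (for $m=0$ this means every block is nonempty). *)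

theory Defs
  imports Main "HOL-Library.Extended_Nat"
begin

text \<open>Entries live in {0} \<union> N \<union> {\<infinity>}, rendered as enat (+ absorbs \<infinity>, min is \<oplus>).
  A T x N matrix is a function S :: nat \<Rightarrow> nat \<Rightarrow> enat, only entries with t < T, j < N matter;
  a vector of length N is x :: nat \<Rightarrow> enat, only entries j < N matter.\<close>

definition trop_mv :: "nat \<Rightarrow> (nat \<Rightarrow> nat \<Rightarrow> enat) \<Rightarrow> (nat \<Rightarrow> enat) \<Rightarrow> nat \<Rightarrow> enat" where
  "trop_mv N S x t = (INF j\<in>{..<N}. S t j + x j)"

definition finite_entries :: "nat \<Rightarrow> (nat \<Rightarrow> enat) \<Rightarrow> nat set" where
  "finite_entries N x = {j. j < N \<and> x j \<noteq> \<infinity>}"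

definition tropical_code :: "nat \<Rightarrow> nat \<Rightarrow> nat \<Rightarrow> (nat \<Rightarrow> nat \<Rightarrow> enat) \<Rightarrow> bool" where
  "tropical_code T N D S \<longleftrightarrow>
     (\<forall>x y. card (finite_entries N x) \<le> D \<longrightarrow> card (finite_entries N y) \<le> D \<longrightarrow>
        (\<exists>j<N. x j \<noteq> y j) \<longrightarrow> (\<exists>t<T. trop_mv N S x t \<noteq> trop_mv N S y t))"

definition block :: "nat \<Rightarrow> (nat \<Rightarrow> nat \<Rightarrow> enat) \<Rightarrow> nat \<Rightarrow> nat set" where
  "block T S j = {t. t < T \<and> S t j < \<infinity>}"

definition disjunct :: "nat \<Rightarrow> nat \<Rightarrow> (nat \<Rightarrow> nat \<Rightarrow> enat) \<Rightarrow> nat \<Rightarrow> bool" where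
  "disjunct T N S m \<longleftrightarrow>
     (\<forall>z<N. \<forall>I. I \<subseteq> {..<N} \<longrightarrow> z \<notin> I \<longrightarrow> card I = m \<longrightarrow>
        card (block T S z - (\<Union>i\<in>I. block T S i)) \<ge> 1)"

end

theory Submission
  imports Defs
begin

theorem mainTheorem9:
  fixes T N D :: nat and S :: "nat \<Rightarrow> nat \<Rightarrow> enat"
  assumes "D \<ge> 1"
    and "tropical_code T N D S"
  shows "disjunct T N S (D - 1)"
  unfolding disjunct_def
proof (intro allI impI, rule ccontr)
  fix z I
  assume z: "z < N" and IN: "I \<subseteq> {..<N}" and zI: "z \<notin> I" and cI: "card I = D - 1"
    and nc: "\<not> 1 \<le> card (block T S z - (\<Union>i\<in>I. block T S i))"
  have fb: "finite (block T S z - (\<Union>i\<in>I. block T S i))"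
    by (rule finite_subset[of _ "{..<T}"]) (auto simp: block_def)
  from nc fb have "block T S z - (\<Union>i\<in>I. block T S i) = {}"
    using card_0_eq by fastforce
  then have cov: "block T S z \<subseteq> (\<Union>i\<in>I. block T S i)" by blast
  have fI: "finite I" using IN finite_subset by blast
  define c :: nat where "c = (\<Sum>t<T. \<Sum>i\<in>I. if S t i = \<infinity> then 0 else the_enat (S t i))"
  have cb: "S t i \<le> enat c" if "t < T" "i \<in> I" "S t i \<noteq> \<infinity>" for t i
  proof -
    have "the_enat (S t i) \<le> (\<Sum>i\<in>I. if S t i = \<infinity> then 0 else the_enat (S t i))"
      using member_le_sum[of i I "\<lambda>i. if S t i = \<infinity> then 0 else the_enat (S t i)"] that fI
      by auto
    also have "\<dots> \<le> c" unfolding c_def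
      using member_le_sum[of t "{..<T}" "\<lambda>t. \<Sum>i\<in>I. if S t i = \<infinity> then 0 else the_enat (S t i)"] that
      by auto
    finally show ?thesis using that by (cases "S t i") auto
  qed
  define x :: "nat \<Rightarrow> enat" where "x = (\<lambda>j. if j \<in> I then 0 else \<infinity>)"
  define y where "y = x(z := enat c)"
  have fx: "finite_entries N x = I" using IN by (auto simp: finite_entries_def x_def zero_enat_def)
  have fy: "finite_entries N y = insert z I" using IN z zI
    by (auto simp: finite_entries_def x_def y_def zero_enat_def)
  have c1: "card (finite_entries N x) \<le> D" using fx cI by simp
  have c2: "card (finite_entries N y) \<le> D" using fy cI fI zI assms(1) by simp
  have d: "\<exists>j<N. x j \<noteq> y j" using z zI by (auto simp: x_def y_def)
  have eq: "trop_mv N S x t = trop_mv N S y t" if "t < T" for t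
  proof -
    let ?A = "{..<N} - {z}"
    have U: "{..<N} = insert z ?A" using z by auto
    have "trop_mv N S x t = min (S t z + x z) (INF j\<in>?A. S t j + x j)"
      unfolding trop_mv_def by (metis U INF_insert inf_min)
    also have "\<dots> = (INF j\<in>?A. S t j + x j)" using zI by (simp add: x_def)
    finally have X: "trop_mv N S x t = (INF j\<in>?A. S t j + x j)" .
    have "trop_mv N S y t = min (S t z + enat c) (INF j\<in>?A. S t j + y j)"
      unfolding trop_mv_def by (metis (no_types, lifting) U INF_insert inf_min fun_upd_same y_def)
    also have "(INF j\<in>?A. S t j + y j) = (INF j\<in>?A. S t j + x j)"
      by (rule INF_cong) (auto simp: y_def)
    finally have Y: "trop_mv N S y t = min (S t z + enat c) (INF j\<in>?A. S t j + x j)" .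
    have "(INF j\<in>?A. S t j + x j) \<le> S t z + enat c"
    proof (cases "S t z = \<infinity>")
      case True then show ?thesis by simp
    next
      case False
      then have "t \<in> block T S z" using that by (auto simp: block_def top.not_eq_extremum)
      with cov obtain i where i: "i \<in> I" "t \<in> block T S i" by auto
      then have fin: "S t i \<noteq> \<infinity>" by (auto simp: block_def)
      have iA: "i \<in> ?A" using i IN zI by auto
      have "(INF j\<in>?A. S t j + x j) \<le> S t i + x i" by (rule INF_lower[OF iA])
      also have "\<dots> = S t i" using i by (simp add: x_def)
      also have "\<dots> \<le> enat c" using cb[OF that i(1) fin] .
      also have "\<dots> \<le> S t z + enat c" by simp
      finally show ?thesis .
    qed
    then show ?thesis using X Y by (simp add: min_def)
  qed
  from assms(2) c1 c2 d obtain t where "t < T" "trop_mv N S x t \<noteq> trop_mv N S y t"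
    unfolding tropical_code_def by blast
  with eq show False by blast
qed

end
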